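(* Let $-\infty<a<b<\infty$ and let $H\in\mathbb H_{a,b}$ be in the limit circle case. Let $c>0$ and let $\kappa_H$ be the function produced by the algorithm with constant $c$. Let $r>0$ and let $a=s_0<s_1<\dots<s_{k-1}<s_k=b$. - (i) If $\det\Omega(s_{l-1},s_l)\le c/r^2$ for all $l\in\{1,\dots,k\}$, then $\kappa_H(r)\le k$. - (ii) If $\det\Omega(s_{l-1},s_l)\ge c/r^2$ for all $l\in\{1,\dots,k-1\}$, then $\kappa_H(r)\ge k$. - (iii) The function $\kappa_H$ is non-decreasing on $(0,\infty)$. - (iv) $\kappa_H(nr)\le n\,\kappa_H(r)$ for every positive integer $n$ and every $r>0$.
   Context: Hamiltonians: $\mathbb H_{a,b}$ consists of measurable $H:(a,b)\to\mathbb R^{2\times2}$, locally integrable on $[a,c)$ for all $c<b$, with $H(t)\ge0$ a.e. and $\{H=0\}$ null. The limit circle case means $\int_a^b\operatorname{tr}H<\infty$. Put $\Omega(s,t)=\int_s^tH(u)\,du$. Algorithm for $\kappa_H$ (constant $c$): for $r>0$ set $\sigma_0=a$. Recursively: - if $\det\Omega(\sigma_{j-1},b)>c/r^2$, let $\sigma_j\in(\sigma_{j-1},b)$ be the unique point with $\det\Omega(\sigma_{j-1},\sigma_j)=c/r^2$; - otherwise set $\sigma_j=b$, $\kappa_H(r)=j$, and stop. This terminates after finitely many steps. *)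

theory Defs
  imports "HOL-Analysis.Analysis"
begin

definition psd2 :: "real^2^2 \<Rightarrow> bool" where
  "psd2 M \<longleftrightarrow> transpose M = M \<and> (\<forall>x. 0 \<le> x \<bullet> (M *v x))"

definition hamiltonian :: "real \<Rightarrow> real \<Rightarrow> (real \<Rightarrow> real^2^2) \<Rightarrow> bool" where
  "hamiltonian a b H \<longleftrightarrow>
     set_borel_measurable lborel {a<..<b} H \<and>
     (\<forall>c\<in>{a<..<b}. set_integrable lborel {a..<c} H) \<and>
     (AE t\<in>{a<..<b} in lborel. psd2 (H t)) \<and>
     {t\<in>{a<..<b}. H t = 0} \<in> null_sets lborel"

definition limit_circle :: "real \<Rightarrow> real \<Rightarrow> (real \<Rightarrow> real^2^2) \<Rightarrow> bool" where
  "limit_circle a b H \<longleftrightarrow> set_integrable lborel {a<..<b} (\<lambda>t. trace (H t))"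

definition Omega :: "(real \<Rightarrow> real^2^2) \<Rightarrow> real \<Rightarrow> real \<Rightarrow> real^2^2" where
  "Omega H s t = (LINT u:{s..t}|lborel. H u)"

fun alg_sigma :: "real \<Rightarrow> real \<Rightarrow> (real \<Rightarrow> real^2^2) \<Rightarrow> real \<Rightarrow> real \<Rightarrow> nat \<Rightarrow> real" where
  "alg_sigma a b H c r 0 = a"
| "alg_sigma a b H c r (Suc j) =
     (let \<sigma> = alg_sigma a b H c r j in
      if det (Omega H \<sigma> b) > c / r\<^sup>2
      then (THE s. s \<in> {\<sigma><..<b} \<and> det (Omega H \<sigma> s) = c / r\<^sup>2)
      else b)"

definition kappa :: "real \<Rightarrow> real \<Rightarrow> (real \<Rightarrow> real^2^2) \<Rightarrow> real \<Rightarrow> real \<Rightarrow> nat" where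
  "kappa a b H c r = (LEAST j. 1 \<le> j \<and> \<not> (det (Omega H (alg_sigma a b H c r (j - 1)) b) > c / r\<^sup>2))"

end

theory Submission
  imports Defs
begin


definition P2 :: "real^2^2 \<Rightarrow> bool" where
  "P2 M \<longleftrightarrow> M$1$2 = M$2$1 \<and> 0 \<le> M$1$1 \<and> 0 \<le> M$2$2 \<and> (M$1$2)\<^sup>2 \<le> M$1$1 * M$2$2"

lemma quad_P2:
  fixes M :: "real^2^2"
  assumes s: "M$1$2 = M$2$1" and q: "\<And>x y. 0 \<le> x\<^sup>2 * M$1$1 + 2*x*y * M$1$2 + y\<^sup>2 * M$2$2"
  shows "P2 M"
proof -
  have 1: "0 \<le> M$1$1" using q[of 1 0] by simp
  have 2: "0 \<le> M$2$2" using q[of 0 1] by simp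
  have 3: "(M$1$2)\<^sup>2 \<le> M$1$1 * M$2$2"
  proof (cases "M$1$1 = 0")
    case True
    show ?thesis
    proof (rule ccontr)
      assume "\<not> ?thesis"
      then have "M$1$2 \<noteq> 0" using True by simp
      then have "0 \<le> 2*((- (M$2$2 + 1)/ (2*M$1$2)))*1 * M$1$2 + M$2$2"
        using q[of "- (M$2$2 + 1)/ (2*M$1$2)" 1] True by simp
      also have "\<dots> = -1" using \<open>M$1$2 \<noteq> 0\<close> by (simp add: field_simps)
      finally show False by simp
    qed
  next
    case False
    then have pos: "0 < M$1$1" using 1 by simp
    have "0 \<le> (- M$1$2)\<^sup>2 * M$1$1 + 2*(- M$1$2)*(M$1$1) * M$1$2 + (M$1$1)\<^sup>2 * M$2$2"
      using q by blast
    also have "\<dots> = M$1$1 * (M$1$1 * M$2$2 - (M$1$2)\<^sup>2)" by (simp add: power2_eq_square algebra_simps)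
    finally have "0 \<le> M$1$1 * M$2$2 - (M$1$2)\<^sup>2" using pos by (simp add: zero_le_mult_iff)
    then show ?thesis by simp
  qed
  show ?thesis using s 1 2 3 unfolding P2_def by simp
qed

lemma psd2_quad:
  fixes M :: "real^2^2"
  assumes "psd2 M"
  shows "M$1$2 = M$2$1" "0 \<le> x\<^sup>2 * M$1$1 + 2*x*y * M$1$2 + y\<^sup>2 * M$2$2"
proof -
  have t: "transpose M = M" and q: "\<And>v. 0 \<le> v \<bullet> (M *v v)" using assms unfolding psd2_def by auto
  show s: "M$1$2 = M$2$1" using arg_cong[OF t, of "\<lambda>A. A$2$1"] by (simp add: transpose_def)
  define v :: "real^2" where "v = (\<chi> i. if i = 1 then x else y)"
  have "v \<bullet> (M *v v) = x\<^sup>2 * M$1$1 + 2*x*y * M$1$2 + y\<^sup>2 * M$2$2"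
    unfolding v_def inner_vec_def matrix_vector_mult_def using s
    by (simp add: sum_2 power2_eq_square algebra_simps)
  then show "0 \<le> x\<^sup>2 * M$1$1 + 2*x*y * M$1$2 + y\<^sup>2 * M$2$2" using q[of v] by simp
qed

lemma psd2_P2: "psd2 M \<Longrightarrow> P2 M"
  by (rule quad_P2) (auto dest: psd2_quad)

lemma P2_trace_pos:
  fixes M :: "real^2^2"
  assumes "P2 M" "M \<noteq> 0"
  shows "0 < M$1$1 + M$2$2"
proof (rule ccontr)
  assume "\<not> ?thesis"
  then have "M$1$1 = 0" "M$2$2 = 0" using assms(1) unfolding P2_def by auto
  then have "M$1$2 = 0" "M$2$1 = 0" using assms(1) unfolding P2_def by auto
  then have "M = 0" using \<open>M$1$1 = 0\<close> \<open>M$2$2 = 0\<close>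
    by (simp add: vec_eq_iff forall_2)
  then show False using assms by simp
qed


lemma det_add_2:
  fixes A B :: "real^2^2"
  assumes "P2 A" "P2 B"
  shows "det (A + B) = det A + det B + (A$2$2 * B$1$1 + A$1$1 * B$2$2 - 2 * A$1$2 * B$1$2)"
  using assms unfolding P2_def by (simp add: det_2 algebra_simps)

lemma P2_det_nonneg: "P2 A \<Longrightarrow> 0 \<le> det A"
proof -
  assume "P2 A"
  then have "A$2$1 = A$1$2" "(A$1$2)\<^sup>2 \<le> A$1$1 * A$2$2" unfolding P2_def by auto
  then show ?thesis by (simp add: det_2 power2_eq_square)
qed

lemma cross_nonneg_aux:
  fixes a1 a2 a3 b1 b2 b3 :: real
  assumes "0 \<le> a1" "0 \<le> a3" "a2\<^sup>2 \<le> a1*a3" "0 \<le> b1" "0 \<le> b3" "b2\<^sup>2 \<le> b1*b3" "0 < a1"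
  shows "a1 * (a3*b1 + a1*b3 - 2*a2*b2) = (a1*a3 - a2\<^sup>2) * b1 + (b1*a2\<^sup>2 - 2*b2*a1*a2 + b3*a1\<^sup>2)"
    and "0 \<le> b1*a2\<^sup>2 - 2*b2*a1*a2 + b3*a1\<^sup>2"
    and "b1 * (b1*a2\<^sup>2 - 2*b2*a1*a2 + b3*a1\<^sup>2) = a1\<^sup>2 * (b1*b3 - b2\<^sup>2) + (b1*a2 - a1*b2)\<^sup>2"
proof -
  show "a1 * (a3*b1 + a1*b3 - 2*a2*b2) = (a1*a3 - a2\<^sup>2) * b1 + (b1*a2\<^sup>2 - 2*b2*a1*a2 + b3*a1\<^sup>2)"
    by (simp add: power2_eq_square algebra_simps)
  show "b1 * (b1*a2\<^sup>2 - 2*b2*a1*a2 + b3*a1\<^sup>2) = a1\<^sup>2 * (b1*b3 - b2\<^sup>2) + (b1*a2 - a1*b2)\<^sup>2"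
    by (simp add: power2_eq_square algebra_simps)
  show "0 \<le> b1*a2\<^sup>2 - 2*b2*a1*a2 + b3*a1\<^sup>2"
  proof (cases "b1 = 0")
    case True
    then have "b2 = 0" using assms by simp
    then show ?thesis using True assms by simp
  next
    case False
    then have "0 < b1" using assms by simp
    have "0 \<le> a1\<^sup>2 * (b1*b3 - b2\<^sup>2) + (b1*a2 - a1*b2)\<^sup>2" using assms by simp
    also have "\<dots> = b1 * (b1*a2\<^sup>2 - 2*b2*a1*a2 + b3*a1\<^sup>2)" by (simp add: power2_eq_square algebra_simps)
    finally show ?thesis using \<open>0 < b1\<close> by (simp add: zero_le_mult_iff)
  qed
qed

lemma cross_bound:
  fixes A B :: "real^2^2" and m d :: real
  assumes PA: "P2 A" and PB: "P2 B" and m: "0 \<le> m" and d: "0 \<le> d"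
    and dA: "m\<^sup>2 * d \<le> det A" and dB: "d \<le> det B"
  shows "2*m*d \<le> A$2$2 * B$1$1 + A$1$1 * B$2$2 - 2 * A$1$2 * B$1$2"
proof -
  define a1 a2 a3 b1 b2 b3 where "a1 = A$1$1" "a2 = A$1$2" "a3 = A$2$2"
    "b1 = B$1$1" "b2 = B$1$2" "b3 = B$2$2"
  have ha: "0 \<le> a1" "0 \<le> a3" "a2\<^sup>2 \<le> a1*a3" and hb: "0 \<le> b1" "0 \<le> b3" "b2\<^sup>2 \<le> b1*b3"
    using PA PB unfolding P2_def a1_a2_a3_b1_b2_b3_def by auto
  have detA: "det A = a1*a3 - a2\<^sup>2" and detB: "det B = b1*b3 - b2\<^sup>2"
    using PA PB unfolding P2_def a1_a2_a3_b1_b2_b3_def by (auto simp: det_2 power2_eq_square)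
  define t where "t = a3*b1 + a1*b3 - 2*a2*b2"
  have "2*m*d \<le> t"
  proof (cases "a1 = 0")
    case True
    then have "a2 = 0" using ha by simp
    then have "m\<^sup>2 * d \<le> 0" using dA detA True by simp
    moreover have "0 \<le> m\<^sup>2 * d" using d by simp
    ultimately have "m\<^sup>2 * d = 0" by linarith
    then have "m * d = 0" by simp
    moreover have "0 \<le> t" unfolding t_def using True \<open>a2 = 0\<close> ha hb by simp
    ultimately show ?thesis by auto
  next
    case False
    then have a1p: "0 < a1" using ha by simp
    note aux = cross_nonneg_aux[OF ha hb a1p]
    define Q where "Q = b1*a2\<^sup>2 - 2*b2*a1*a2 + b3*a1\<^sup>2"
    define DA where "DA = a1*a3 - a2\<^sup>2"
    define E where "E = b1*b3 - b2\<^sup>2"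
    have Q0: "0 \<le> Q" using aux(2) Q_def by simp
    have DA0: "0 \<le> DA" using ha DA_def by simp
    have eq1: "a1 * t = DA * b1 + Q" using aux(1) unfolding t_def Q_def DA_def by simp
    have eq2: "b1 * Q = a1\<^sup>2 * E + (b1*a2 - a1*b2)\<^sup>2" using aux(3) unfolding Q_def E_def by simp
    have t0: "0 \<le> t"
    proof -
      have "0 \<le> a1 * t" using eq1 Q0 DA0 hb by simp
      then show ?thesis using a1p by (simp add: zero_le_mult_iff)
    qed
    have "(DA*b1 + Q)\<^sup>2 \<ge> 4 * (DA*b1) * Q"
    proof -
      have "(DA*b1 + Q)\<^sup>2 - 4 * (DA*b1) * Q = (DA*b1 - Q)\<^sup>2" by (simp add: power2_eq_square algebra_simps)
      then show ?thesis using zero_le_power2[of "DA*b1 - Q"] by linarith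
    qed
    moreover have "DA * (b1 * Q) \<ge> DA * (a1\<^sup>2 * E)"
      using eq2 DA0 by (intro mult_left_mono) auto
    moreover have "DA * E \<ge> (m\<^sup>2 * d) * d"
    proof (rule mult_mono)
      show "m\<^sup>2 * d \<le> DA" using dA detA DA_def by simp
      show "d \<le> E" using dB detB E_def by simp
      show "0 \<le> DA" by (rule DA0)
      show "0 \<le> d" by (rule d)
    qed
    ultimately have X: "(a1*t)\<^sup>2 \<ge> a1\<^sup>2 * (4 * m\<^sup>2 * d\<^sup>2)"
    proof -
      assume h1: "(DA*b1 + Q)\<^sup>2 \<ge> 4 * (DA*b1) * Q" and h2: "DA * (b1 * Q) \<ge> DA * (a1\<^sup>2 * E)"
        and h3: "DA * E \<ge> (m\<^sup>2 * d) * d"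
      have "a1\<^sup>2 * (4 * m\<^sup>2 * d\<^sup>2) = 4 * (a1\<^sup>2 * ((m\<^sup>2 * d) * d))"
        by algebra
      also have "\<dots> \<le> 4 * (a1\<^sup>2 * (DA * E))"
        by (intro mult_left_mono h3) auto
      also have "\<dots> = 4 * (DA * (a1\<^sup>2 * E))" by algebra
      also have "\<dots> \<le> 4 * (DA * (b1 * Q))" using h2 by linarith
      also have "\<dots> = 4 * (DA*b1) * Q" by algebra
      also have "\<dots> \<le> (DA*b1 + Q)\<^sup>2" by (rule h1)
      also have "\<dots> = (a1*t)\<^sup>2" using eq1 by simp
      finally show ?thesis .
    qed
    have Y: "(a1 * (2*m*d))\<^sup>2 = a1\<^sup>2 * (4 * m\<^sup>2 * d\<^sup>2)" by algebra
    have sq: "(a1*t)\<^sup>2 \<ge> (a1 * (2*m*d))\<^sup>2" using Y X by (rule ord_eq_le_trans)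
    have "a1*(2*m*d) \<le> a1 * t"
      by (rule power2_le_imp_le[OF sq]) (use t0 a1p in simp)
    then show ?thesis using a1p by (rule mult_left_le_imp_le)
  qed
  then show ?thesis unfolding t_def a1_a2_a3_b1_b2_b3_def .
qed

lemma cross_pos:
  fixes A B :: "real^2^2"
  assumes PA: "P2 A" and PB: "P2 B" and dA: "0 < det A" and tB: "0 < B$1$1 + B$2$2"
  shows "0 < A$2$2 * B$1$1 + A$1$1 * B$2$2 - 2 * A$1$2 * B$1$2"
proof -
  define a1 a2 a3 b1 b2 b3 where "a1 = A$1$1" "a2 = A$1$2" "a3 = A$2$2"
    "b1 = B$1$1" "b2 = B$1$2" "b3 = B$2$2"
  have ha: "0 \<le> a1" "0 \<le> a3" "a2\<^sup>2 \<le> a1*a3" and hb: "0 \<le> b1" "0 \<le> b3" "b2\<^sup>2 \<le> b1*b3"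
    using PA PB unfolding P2_def a1_a2_a3_b1_b2_b3_def by auto
  have detA: "det A = a1*a3 - a2\<^sup>2"
    using PA unfolding P2_def a1_a2_a3_b1_b2_b3_def by (auto simp: det_2 power2_eq_square)
  have a1p: "0 < a1"
  proof (rule ccontr)
    assume "\<not> 0 < a1" then have "a1 = 0" using ha by simp
    then show False using dA detA by simp
  qed
  note aux = cross_nonneg_aux[OF ha hb a1p]
  have DAp: "0 < a1*a3 - a2\<^sup>2" using dA detA by simp
  have "0 < a1 * (a3*b1 + a1*b3 - 2*a2*b2)"
  proof (cases "b1 = 0")
    case True
    then have "b2 = 0" using hb by simp
    then have "b3 > 0" using True tB a1_a2_a3_b1_b2_b3_def by simp
    then show ?thesis using True \<open>b2 = 0\<close> a1p by simp
  next
    case False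
    then have "0 < b1" using hb by simp
    then have "0 < (a1*a3 - a2\<^sup>2) * b1" using DAp by simp
    then show ?thesis using aux(1,2) by linarith
  qed
  then have "0 < a3*b1 + a1*b3 - 2*a2*b2" using a1p by (simp add: zero_less_mult_iff)
  then show ?thesis unfolding a1_a2_a3_b1_b2_b3_def by (simp add: algebra_simps)
qed

lemma P2_add: "P2 A \<Longrightarrow> P2 B \<Longrightarrow> P2 (A + B)"
proof -
  assume PA: "P2 A" and PB: "P2 B"
  have c: "0 \<le> A$2$2 * B$1$1 + A$1$1 * B$2$2 - 2 * A$1$2 * B$1$2"
    using cross_bound[OF PA PB, of 0 0] P2_det_nonneg[OF PA] P2_det_nonneg[OF PB] by simp
  have dd: "det (A+B) \<ge> 0" using det_add_2[OF PA PB] c P2_det_nonneg[OF PA] P2_det_nonneg[OF PB] by linarith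
  define C where "C = A + B"
  have s: "C$1$2 = C$2$1" using PA PB unfolding P2_def C_def by simp
  have d1: "0 \<le> C$1$1" "0 \<le> C$2$2" using PA PB unfolding P2_def C_def by simp_all
  have "det C = C$1$1 * C$2$2 - (C$1$2)\<^sup>2" using s by (simp add: det_2 power2_eq_square)
  then have "(C$1$2)\<^sup>2 \<le> C$1$1 * C$2$2" using dd C_def by simp
  then show "P2 (A + B)" using s d1 unfolding P2_def C_def by simp
qed

lemma det_mono_P2: "P2 A \<Longrightarrow> P2 B \<Longrightarrow> det A \<le> det (A + B)"
proof -
  assume PA: "P2 A" and PB: "P2 B"
  have c: "0 \<le> A$2$2 * B$1$1 + A$1$1 * B$2$2 - 2 * A$1$2 * B$1$2"
    using cross_bound[OF PA PB, of 0 0] P2_det_nonneg[OF PA] P2_det_nonneg[OF PB] by simp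
  then show ?thesis using det_add_2[OF PA PB] P2_det_nonneg[OF PB] by linarith
qed

lemma det_strict_P2: "P2 A \<Longrightarrow> P2 B \<Longrightarrow> 0 < det A \<Longrightarrow> 0 < B$1$1 + B$2$2 \<Longrightarrow> det A < det (A + B)"
proof -
  assume PA: "P2 A" and PB: "P2 B" and "0 < det A" "0 < B$1$1 + B$2$2"
  then have c: "0 < A$2$2 * B$1$1 + A$1$1 * B$2$2 - 2 * A$1$2 * B$1$2"
    using cross_pos by blast
  then show ?thesis using det_add_2[OF PA PB] P2_det_nonneg[OF PB] by linarith
qed

lemma det_super_P2:
  assumes "P2 A" "P2 B" "0 \<le> m" "0 \<le> d" "m\<^sup>2 * d \<le> det A" "d \<le> det B"
  shows "(m+1)\<^sup>2 * d \<le> det (A + B)"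
proof -
  have "2*m*d \<le> A$2$2 * B$1$1 + A$1$1 * B$2$2 - 2 * A$1$2 * B$1$2" by (rule cross_bound) fact+
  moreover have "(m+1)\<^sup>2 * d = m\<^sup>2 * d + d + 2*m*d" by algebra
  ultimately show ?thesis using det_add_2[OF assms(1,2)] assms(5,6) by linarith
qed




lemma psd2_norm_le: 
  fixes M :: "real^2^2"
  assumes "psd2 M" shows "norm M \<le> 2 * trace M"
proof -
  have s: "M$1$2 = M$2$1" using psd2_quad[OF assms] by simp
  have q1: "0 \<le> M$1$1 + 2 * M$1$2 + M$2$2" using psd2_quad(2)[OF assms, of 1 1] by simp
  have q2: "0 \<le> M$1$1 - 2 * M$1$2 + M$2$2" using psd2_quad(2)[OF assms, of 1 "-1"] by simp
  have d1: "0 \<le> M$1$1" using psd2_quad(2)[OF assms, of 1 0] by simp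
  have d2: "0 \<le> M$2$2" using psd2_quad(2)[OF assms, of 0 1] by simp
  have "norm M \<le> sum (\<lambda>i. norm (M$i)) UNIV"
    by (subst norm_vec_def) (rule L2_set_le_sum, simp)
  then have "norm M \<le> norm (M$1) + norm (M$2)" by (simp add: sum_2)
  also have "norm (M$1) \<le> \<bar>M$1$1\<bar> + \<bar>M$1$2\<bar>" using norm_le_l1_cart[of "M$1"] by (simp add: sum_2)
  also have "norm (M$2) \<le> \<bar>M$2$1\<bar> + \<bar>M$2$2\<bar>" using norm_le_l1_cart[of "M$2"] by (simp add: sum_2)
  finally have "norm M \<le> \<bar>M$1$1\<bar> + \<bar>M$1$2\<bar> + (\<bar>M$2$1\<bar> + \<bar>M$2$2\<bar>)" by simp
  moreover have "trace M = M$1$1 + M$2$2" by (simp add: trace_def sum_2)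
  ultimately show ?thesis using s q1 q2 d1 d2 by linarith
qed

lemma psd2_mat1: "psd2 (mat 1)"
  unfolding psd2_def by simp

lemma mat1_ne0: "(mat 1 :: real^2^2) \<noteq> 0"
proof
  assume "(mat 1 :: real^2^2) = 0"
  then have "(mat 1 :: real^2^2)$1$1 = 0" by simp
  then show False by (simp add: mat_def)
qed

lemma entry_bl: "bounded_linear (\<lambda>M::real^2^2. M$i$j)"
  by (rule bounded_linear_compose[OF bounded_linear_vec_nth[of j] bounded_linear_vec_nth[of i]])

lemma quad_bl: "bounded_linear (\<lambda>M::real^2^2. x\<^sup>2 * M$1$1 + 2*x*y * M$1$2 + y\<^sup>2 * M$2$2)"
  unfolding linear_conv_bounded_linear[symmetric]
  by (rule linearI) (simp_all add: algebra_simps)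

lemma tr_bl: "bounded_linear (\<lambda>M::real^2^2. M$1$1 + M$2$2)"
  unfolding linear_conv_bounded_linear[symmetric]
  by (rule linearI) (simp_all add: algebra_simps)

lemma integral_pos_real:
  fixes f :: "real \<Rightarrow> real"
  assumes f: "f integrable_on {u..v}" and pos: "\<And>x. x \<in> {u..v} \<Longrightarrow> 0 < f x" and uv: "u < v"
  shows "0 < integral {u..v} f"
proof -
  have ge: "0 \<le> integral {u..v} f" using integral_nonneg[OF f] pos by (simp add: less_imp_le)
  have "integral {u..v} f \<noteq> 0"
  proof
    assume z: "integral {u..v} f = 0"
    have ai: "f absolutely_integrable_on {u..v}"
      using nonnegative_absolutely_integrable_1[OF f] pos by (simp add: less_imp_le)
    then have "(LINT x:{u..v} | lebesgue. f x) = 0"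
      using set_lebesgue_integral_eq_integral(2)[OF ai] z by simp
    then have "integral\<^sup>L lebesgue (\<lambda>x. indicator {u..v} x *\<^sub>R f x) = 0"
      unfolding set_lebesgue_integral_def by simp
    moreover have "integrable lebesgue (\<lambda>x. indicator {u..v} x *\<^sub>R f x)"
      using ai unfolding set_integrable_def .
    moreover have "AE x in lebesgue. 0 \<le> indicator {u..v} x *\<^sub>R f x"
      using pos by (auto simp: indicator_def less_imp_le)
    ultimately have "AE x in lebesgue. indicator {u..v} x *\<^sub>R f x = 0"
      using integral_nonneg_eq_0_iff_AE by blast
    then have "AE x in lebesgue. x \<notin> {u..v}"
    proof (rule eventually_mono)
      fix x assume h: "indicator {u..v} x *\<^sub>R f x = (0::real)"
      show "x \<notin> {u..v}"
      proof
        assume x: "x \<in> {u..v}"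
        then have "f x = 0" using h by simp
        then show False using pos[OF x] by simp
      qed
    qed
    then have "{u..v} \<in> null_sets lebesgue"
      by (subst AE_iff_null_sets) auto
    then have "negligible {u..v}" using negligible_iff_null_sets by blast
    then have "negligible (cbox u v)" by simp
    then show False using negligible_interval(1)[of u v] uv by simp
  qed
  then show ?thesis using ge by simp
qed

locale HL =
  fixes a b :: real and H :: "real \<Rightarrow> real^2^2"
  assumes ab: "a < b" and ham: "hamiltonian a b H" and lc: "limit_circle a b H"
begin

lemma int_open: "set_integrable lborel {a<..<b} H"
proof (rule set_integrable_bound[where f = "\<lambda>t. 2 * trace (H t)"])
  show "set_integrable lborel {a<..<b} (\<lambda>t. 2 * trace (H t))"
    using lc unfolding limit_circle_def by simp
  show "set_borel_measurable lborel {a<..<b} H" using ham unfolding hamiltonian_def by simp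
  have "AE t in lborel. t \<in> {a<..<b} \<longrightarrow> psd2 (H t)" using ham unfolding hamiltonian_def by simp
  then show "AE t in lborel. t \<in> {a<..<b} \<longrightarrow> norm (H t) \<le> norm (2 * trace (H t))"
    by eventually_elim (auto intro: order_trans[OF psd2_norm_le])
qed

lemma int_closed: "set_integrable lborel {a..b} H"
proof -
  have "set_integrable lborel {a..b} H \<longleftrightarrow> set_integrable lborel {a<..<b} H"
    by (rule set_integrable_discrete_difference[where X="{a,b}"]) auto
  then show ?thesis using int_open by simp
qed

lemma H_integrable: "H integrable_on {a..b}"
  using set_borel_integral_eq_integral(1)[OF int_closed] .

lemma Omega_eq: "a \<le> s \<Longrightarrow> t \<le> b \<Longrightarrow> Omega H s t = integral {s..t} H"
proof -
  assume "a \<le> s" "t \<le> b"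
  then have "set_integrable lborel {s..t} H"
    by (intro set_integrable_subset[OF int_closed]) auto
  then show ?thesis unfolding Omega_def by (rule set_borel_integral_eq_integral(2))
qed

definition N where "N = {a,b} \<union> {t\<in>{a<..<b}. \<not> psd2 (H t)} \<union> {t\<in>{a<..<b}. H t = 0}"

lemma N_negl: "negligible N"
proof -
  have "AE t in lborel. t \<in> {a<..<b} \<longrightarrow> psd2 (H t)" using ham unfolding hamiltonian_def by simp
  then obtain N0 where N0: "N0 \<in> null_sets lborel" "{t \<in> space lborel. \<not> (t \<in> {a<..<b} \<longrightarrow> psd2 (H t))} \<subseteq> N0"
    unfolding eventually_ae_filter by blast
  have "negligible N0" using N0(1) negligible_iff_null_sets null_sets_completionI by blast
  then have n1: "negligible {t\<in>{a<..<b}. \<not> psd2 (H t)}"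
    by (rule negligible_subset) (use N0(2) in auto)
  have "{t\<in>{a<..<b}. H t = 0} \<in> null_sets lborel" using ham unfolding hamiltonian_def by simp
  then have n2: "negligible {t\<in>{a<..<b}. H t = 0}"
    using negligible_iff_null_sets null_sets_completionI by blast
  show ?thesis unfolding N_def using n1 n2 by (simp add: negligible_Un)
qed

definition G where "G t = (if psd2 (H t) \<and> H t \<noteq> 0 then H t else mat 1)"

lemma G_psd: "psd2 (G t)" unfolding G_def using psd2_mat1 by auto
lemma G_P2: "P2 (G t)" using psd2_P2[OF G_psd] .
lemma G_ne0: "G t \<noteq> 0" unfolding G_def using mat1_ne0 by auto
lemma G_tr: "0 < G t $1$1 + G t $2$2" using P2_trace_pos[OF G_P2 G_ne0] .

lemma G_eq: "t \<in> {a..b} - N \<Longrightarrow> G t = H t"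
  unfolding G_def N_def by auto

lemma G_integrable: "G integrable_on {a..b}"
  by (rule integrable_spike[OF H_integrable N_negl]) (simp add: G_eq)

lemma G_integrable_sub: "a \<le> s \<Longrightarrow> t \<le> b \<Longrightarrow> G integrable_on {s..t}"
  by (rule integrable_on_subinterval[OF G_integrable]) auto

definition Om where "Om s t = integral {s..t} G"

lemma Omega_O: "a \<le> s \<Longrightarrow> t \<le> b \<Longrightarrow> Omega H s t = Om s t"
proof -
  assume h: "a \<le> s" "t \<le> b"
  have "integral {s..t} H = integral {s..t} G"
    by (rule integral_spike[OF N_negl]) (use h G_eq in auto)
  then show ?thesis using Omega_eq[OF h] Om_def by simp
qed

lemma O_lin:
  assumes "a \<le> s" "t \<le> b" "bounded_linear h"
  shows "h (Om s t) = integral {s..t} (\<lambda>u. h (G u))"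
  using integral_linear[OF G_integrable_sub[OF assms(1,2)] assms(3)] unfolding Om_def o_def by simp

lemma O_lin_int:
  assumes "a \<le> s" "t \<le> b" "bounded_linear h"
  shows "(\<lambda>u. h (G u)) integrable_on {s..t}"
  using integrable_linear[OF G_integrable_sub[OF assms(1,2)] assms(3)] unfolding o_def by simp

lemma O_P2: assumes "a \<le> s" "t \<le> b" shows "P2 (Om s t)"
proof (rule quad_P2)
  have "Om s t $1$2 = integral {s..t} (\<lambda>u. G u $1$2)" by (rule O_lin[OF assms entry_bl])
  also have "\<dots> = integral {s..t} (\<lambda>u. G u $2$1)"
    using G_P2 unfolding P2_def by simp
  also have "\<dots> = Om s t $2$1" by (rule O_lin[OF assms entry_bl, symmetric])
  finally show "Om s t $1$2 = Om s t $2$1" .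
  fix x y :: real
  have "x\<^sup>2 * Om s t $1$1 + 2*x*y * Om s t $1$2 + y\<^sup>2 * Om s t $2$2
     = integral {s..t} (\<lambda>u. x\<^sup>2 * G u $1$1 + 2*x*y * G u $1$2 + y\<^sup>2 * G u $2$2)"
    by (rule O_lin[OF assms quad_bl])
  also have "\<dots> \<ge> 0"
    by (rule integral_nonneg[OF O_lin_int[OF assms quad_bl]]) (use psd2_quad(2)[OF G_psd] in simp)
  finally show "0 \<le> x\<^sup>2 * Om s t $1$1 + 2*x*y * Om s t $1$2 + y\<^sup>2 * Om s t $2$2" .
qed

lemma O_tr: assumes "a \<le> u" "u < v" "v \<le> b" shows "0 < Om u v $1$1 + Om u v $2$2"
proof -
  have "Om u v $1$1 + Om u v $2$2 = integral {u..v} (\<lambda>w. G w $1$1 + G w $2$2)"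
    by (rule O_lin[OF assms(1,3) tr_bl])
  also have "\<dots> > 0"
    by (rule integral_pos_real[OF O_lin_int[OF assms(1,3) tr_bl]]) (use G_tr assms in auto)
  finally show ?thesis .
qed

lemma O_add: "a \<le> s \<Longrightarrow> s \<le> u \<Longrightarrow> u \<le> t \<Longrightarrow> t \<le> b \<Longrightarrow> Om s t = Om s u + Om u t"
  unfolding Om_def using Henstock_Kurzweil_Integration.integral_combine[OF _ _ G_integrable_sub[of s t]] by simp

lemma O_refl: "Om s s = 0"
  unfolding Om_def by simp

lemma O_cont: "a \<le> s \<Longrightarrow> s \<le> b \<Longrightarrow> continuous_on {s..b} (Om s)"
  unfolding Om_def[abs_def] by (rule indefinite_integral_continuous_1[OF G_integrable_sub]) auto

definition D where "D s t = det (Om s t)"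

lemma D_cont: assumes "a \<le> s" "s \<le> b" shows "continuous_on {s..b} (D s)"
proof -
  have c: "continuous_on {s..b} (Om s)" using O_cont assms by simp
  have "continuous_on {s..b} (\<lambda>t. Om s t $1$1 * Om s t $2$2 - Om s t $1$2 * Om s t $2$1)"
    by (intro continuous_intros c)
  then show ?thesis unfolding D_def[abs_def] det_2 .
qed

lemma D_refl: "D s s = 0" unfolding D_def O_refl by (simp add: det_2)

lemma D_nonneg: "a \<le> s \<Longrightarrow> t \<le> b \<Longrightarrow> 0 \<le> D s t"
  unfolding D_def using O_P2 P2_det_nonneg by blast

lemma D_mono_r: "a \<le> u \<Longrightarrow> u \<le> v \<Longrightarrow> v \<le> v' \<Longrightarrow> v' \<le> b \<Longrightarrow> D u v \<le> D u v'"
  unfolding D_def using O_add[of u v v'] det_mono_P2[OF O_P2[of u v] O_P2[of v v']] by simp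

lemma D_mono_l: "a \<le> u' \<Longrightarrow> u' \<le> u \<Longrightarrow> u \<le> v \<Longrightarrow> v \<le> b \<Longrightarrow> D u v \<le> D u' v"
  unfolding D_def using O_add[of u' u v] det_mono_P2[OF O_P2[of u v] O_P2[of u' u]] by (simp add: add.commute)

lemma D_mono: "a \<le> u' \<Longrightarrow> u' \<le> u \<Longrightarrow> u \<le> v \<Longrightarrow> v \<le> v' \<Longrightarrow> v' \<le> b \<Longrightarrow> D u v \<le> D u' v'"
  using D_mono_r[of u v v'] D_mono_l[of u' u v'] by simp

lemma D_strict: "a \<le> u \<Longrightarrow> u \<le> v \<Longrightarrow> v < v' \<Longrightarrow> v' \<le> b \<Longrightarrow> 0 < D u v \<Longrightarrow> D u v < D u v'"
  unfolding D_def using O_add[of u v v'] det_strict_P2[OF O_P2[of u v] O_P2[of v v']] O_tr[of v v'] by simp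

lemma chain_mono:
  fixes t :: "nat \<Rightarrow> real"
  assumes "\<And>i. i < n \<Longrightarrow> t i \<le> t (Suc i)"
  shows "i \<le> j \<Longrightarrow> j \<le> n \<Longrightarrow> t i \<le> t j"
proof (induction j)
  case 0 then show ?case by simp
next
  case (Suc j)
  then show ?case using assms[of j] by (cases "i = Suc j") auto
qed

lemma D_super:
  fixes t :: "nat \<Rightarrow> real"
  assumes "a \<le> t 0" "\<And>i. i < n \<Longrightarrow> t i \<le> t (Suc i)" "t n \<le> b" "0 \<le> d"
    "\<And>i. i < n \<Longrightarrow> d \<le> D (t i) (t (Suc i))"
  shows "(real n)\<^sup>2 * d \<le> D (t 0) (t n)"
  using assms
proof (induction n)
  case 0
  then show ?case by (simp add: D_refl)
next
  case (Suc n)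
  have tn: "t n \<le> t (Suc n)" using Suc.prems(2) by simp
  have tnb: "t n \<le> b" using tn Suc.prems(3) by simp
  have t0n: "t 0 \<le> t n" using chain_mono[of "Suc n" t 0 n] Suc.prems(2) by simp
  have IH: "(real n)\<^sup>2 * d \<le> D (t 0) (t n)"
    using Suc.IH[OF Suc.prems(1) _ tnb Suc.prems(4)] Suc.prems(2,5) by simp
  have last: "d \<le> D (t n) (t (Suc n))" using Suc.prems(5) by simp
  have "(real n + 1)\<^sup>2 * d \<le> det (Om (t 0) (t n) + Om (t n) (t (Suc n)))"
    by (rule det_super_P2) (use O_P2 Suc.prems(1) tnb t0n Suc.prems(3) Suc.prems(4) IH last D_def in auto)
  also have "Om (t 0) (t n) + Om (t n) (t (Suc n)) = Om (t 0) (t (Suc n))"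
    using O_add[of "t 0" "t n" "t (Suc n)"] Suc.prems(1,3) t0n tn by simp
  finally show ?case unfolding D_def by (simp add: add.commute)
qed

end



lemma chain_strict:
  fixes t :: "nat \<Rightarrow> real"
  assumes "\<And>i. i < n \<Longrightarrow> t i < t (Suc i)"
  shows "i < j \<Longrightarrow> j \<le> n \<Longrightarrow> t i < t j"
proof (induction j)
  case 0 then show ?case by simp
next
  case (Suc j)
  then show ?case using assms[of j] by (cases "i = j") auto
qed

locale HLc = HL +
  fixes c :: real
  assumes cpos: "0 < c"
begin

abbreviation sig where "sig r j \<equiv> alg_sigma a b H c r j"
abbreviation K where "K r \<equiv> kappa a b H c r"

lemma ex_unique:
  assumes "a \<le> x" "x \<le> b" "0 < e" "e < D x b"
  shows "\<exists>!s. s \<in> {x<..<b} \<and> D x s = e"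
proof -
  have xb: "x \<le> b" using assms by simp
  obtain s where s: "x \<le> s" "s \<le> b" "D x s = e"
    using IVT'[of "D x" x e b] D_refl[of x] assms D_cont[OF assms(1,2)] by auto
  have "s \<noteq> x" using s(3) D_refl[of x] assms(3) by auto
  moreover have "s \<noteq> b" using s(3) assms(4) by auto
  ultimately have ex: "s \<in> {x<..<b} \<and> D x s = e" using s by auto
  show ?thesis
  proof (rule ex1I[of _ s])
    show "s \<in> {x<..<b} \<and> D x s = e" by (rule ex)
    fix s' assume s': "s' \<in> {x<..<b} \<and> D x s' = e"
    show "s' = s"
    proof (rule linorder_cases[of s' s])
      assume "s' < s"
      then have "D x s' < D x s" using D_strict[of x s' s] s' s assms by auto
      then show ?thesis using s' s by simp
    next
      assume "s < s'"
      then have "D x s < D x s'" using D_strict[of x s s'] s' s assms ex by auto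
      then show ?thesis using s' s by simp
    qed simp
  qed
qed

lemma sig_Suc_gen:
  assumes "a \<le> sig r j" "sig r j \<le> b"
  shows "sig r (Suc j) = (if D (sig r j) b > c / r\<^sup>2
      then (THE s. s \<in> {sig r j<..<b} \<and> D (sig r j) s = c / r\<^sup>2) else b)"
proof -
  define x where "x = sig r j"
  have x: "a \<le> x" "x \<le> b" using assms x_def by auto
  have om: "Omega H x b = Om x b" using Omega_O x by simp
  have P: "(\<lambda>s. s \<in> {x<..<b} \<and> det (Omega H x s) = c / r\<^sup>2) = (\<lambda>s. s \<in> {x<..<b} \<and> D x s = c / r\<^sup>2)"
    using Omega_O x D_def by (auto intro!: ext)
  show ?thesis using om P D_def by (simp add: x_def[symmetric] Let_def)
qed

lemma sig_range: "r \<noteq> 0 \<Longrightarrow> a \<le> sig r j \<and> sig r j \<le> b"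
proof (induction j)
  case 0 then show ?case using ab by simp
next
  case (Suc j)
  define x where "x = sig r j"
  have x: "a \<le> x" "x \<le> b" using Suc x_def by auto
  have e: "0 < c / r\<^sup>2" using cpos Suc.prems by simp
  note S = sig_Suc_gen[of r j, folded x_def, OF x]
  show ?case
  proof (cases "D x b > c / r\<^sup>2")
    case True
    have "\<exists>!s. s \<in> {x<..<b} \<and> D x s = c / r\<^sup>2" by (rule ex_unique[OF x e True])
    then have "(THE s. s \<in> {x<..<b} \<and> D x s = c / r\<^sup>2) \<in> {x<..<b}"
      by (metis (mono_tags, lifting) theI')
    then show ?thesis using True x S by simp
  next
    case False
    then show ?thesis using ab S by simp
  qed
qed

lemma sig_step:
  assumes r: "r \<noteq> 0" and gt: "D (sig r j) b > c / r\<^sup>2"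
  shows "sig r (Suc j) \<in> {sig r j<..<b}" "D (sig r j) (sig r (Suc j)) = c / r\<^sup>2"
proof -
  define x where "x = sig r j"
  have x: "a \<le> x" "x \<le> b" using sig_range[OF r] x_def by auto
  have e: "0 < c / r\<^sup>2" using cpos r by simp
  note S = sig_Suc_gen[of r j, folded x_def, OF x]
  have "\<exists>!s. s \<in> {x<..<b} \<and> D x s = c / r\<^sup>2" by (rule ex_unique[OF x e gt[folded x_def]])
  then have "(THE s. s \<in> {x<..<b} \<and> D x s = c / r\<^sup>2) \<in> {x<..<b} \<and> D x (THE s. s \<in> {x<..<b} \<and> D x s = c / r\<^sup>2) = c / r\<^sup>2"
    by (rule theI')
  then show "sig r (Suc j) \<in> {sig r j<..<b}" "D (sig r j) (sig r (Suc j)) = c / r\<^sup>2"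
    using S gt x_def by auto
qed

lemma sig_stop:
  assumes "r \<noteq> 0" "\<not> D (sig r j) b > c / r\<^sup>2"
  shows "sig r (Suc j) = b"
  using sig_Suc_gen[of r j] sig_range[OF assms(1), of j] assms(2) by simp

lemma K_def': "r \<noteq> 0 \<Longrightarrow> K r = (LEAST j. 1 \<le> j \<and> \<not> D (sig r (j - 1)) b > c / r\<^sup>2)"
proof -
  assume r: "r \<noteq> 0"
  have "(\<lambda>j. 1 \<le> j \<and> \<not> det (Omega H (sig r (j - 1)) b) > c / r\<^sup>2) = (\<lambda>j. 1 \<le> j \<and> \<not> D (sig r (j - 1)) b > c / r\<^sup>2)"
    using sig_range[OF r] Omega_O D_def by (auto intro!: ext)
  then show ?thesis unfolding kappa_def by simp
qed

lemma terminates: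
  assumes r: "r \<noteq> 0"
  shows "\<exists>j. 1 \<le> j \<and> \<not> D (sig r (j - 1)) b > c / r\<^sup>2"
proof (rule ccontr)
  assume "\<not> ?thesis"
  then have all: "D (sig r j) b > c / r\<^sup>2" for j
    using spec[of _ "Suc j"] by auto
  define e where "e = c / r\<^sup>2"
  have e: "0 < e" using cpos r e_def by simp
  obtain n :: nat where n: "D a b / e < real n" using reals_Archimedean2 by blast
  have "(real n)\<^sup>2 * e \<le> D (sig r 0) (sig r n)"
  proof (rule D_super)
    show "a \<le> sig r 0" by simp
    show "sig r i \<le> sig r (Suc i)" for i using sig_step(1)[OF r all[of i]] by simp
    show "sig r n \<le> b" using sig_range[OF r] by simp
    show "0 \<le> e" using e by simp
    show "e \<le> D (sig r i) (sig r (Suc i))" for i using sig_step(2)[OF r all[of i]] e_def by simp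
  qed
  also have "\<dots> \<le> D a b" using D_mono[of a a "sig r n" b] sig_range[OF r, of n] by simp
  finally have 1: "(real n)\<^sup>2 * e \<le> D a b" .
  have "D a b < real n * e" using n e by (simp add: field_simps)
  also have "real n * e \<le> (real n)\<^sup>2 * e"
  proof (cases n)
    case 0 then show ?thesis by simp
  next
    case (Suc m)
    then have "real n \<le> (real n)\<^sup>2" by (simp add: power2_eq_square)
    then show ?thesis using e by (simp add: mult_right_mono)
  qed
  finally show False using 1 by simp
qed

lemma K_props:
  assumes r: "r \<noteq> 0"
  shows "1 \<le> K r" "\<not> D (sig r (K r - 1)) b > c / r\<^sup>2"
    "\<And>j. 1 \<le> j \<Longrightarrow> j < K r \<Longrightarrow> D (sig r (j - 1)) b > c / r\<^sup>2"
proof -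
  have ex: "\<exists>j. 1 \<le> j \<and> \<not> D (sig r (j - 1)) b > c / r\<^sup>2" by (rule terminates[OF r])
  have "1 \<le> K r \<and> \<not> D (sig r (K r - 1)) b > c / r\<^sup>2"
    unfolding K_def'[OF r] by (rule LeastI_ex[OF ex])
  then show "1 \<le> K r" "\<not> D (sig r (K r - 1)) b > c / r\<^sup>2" by auto
  fix j assume "1 \<le> j" "j < K r"
  then show "D (sig r (j - 1)) b > c / r\<^sup>2"
    using not_less_Least[of j "\<lambda>j. 1 \<le> j \<and> \<not> D (sig r (j - 1)) b > c / r\<^sup>2"] K_def'[OF r] by auto
qed

lemma K_le:
  assumes r: "r \<noteq> 0" and "1 \<le> j" "\<not> D (sig r (j - 1)) b > c / r\<^sup>2"
  shows "K r \<le> j"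
  unfolding K_def'[OF r] by (rule Least_le) (use assms in auto)

lemma alg_part:
  assumes r: "r \<noteq> 0"
  shows "sig r (K r) = b" "\<And>l. l < K r \<Longrightarrow> sig r l < sig r (Suc l)"
    "\<And>l. 1 \<le> l \<Longrightarrow> l < K r \<Longrightarrow> D (sig r (l - 1)) (sig r l) = c / r\<^sup>2"
proof -
  note KP = K_props[OF r]
  have inner: "sig r j \<in> {sig r (j-1)<..<b} \<and> D (sig r (j - 1)) (sig r j) = c / r\<^sup>2"
    if "1 \<le> j" "j < K r" for j
  proof -
    have "Suc (j - 1) = j" using that by simp
    then show ?thesis using sig_step[OF r KP(3)[OF that]] by simp
  qed
  show "D (sig r (l - 1)) (sig r l) = c / r\<^sup>2" if "1 \<le> l" "l < K r" for l
    using inner[OF that] by simp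
  have "Suc (K r - 1) = K r" using KP(1) by simp
  then show sK: "sig r (K r) = b" using sig_stop[OF r KP(2)] by simp
  show "sig r l < sig r (Suc l)" if "l < K r" for l
  proof (cases "Suc l < K r")
    case True
    then show ?thesis using inner[of "Suc l"] by simp
  next
    case False
    then have "Suc l = K r" using that by simp
    moreover have "sig r l < b"
    proof (cases "l = 0")
      case True then show ?thesis using ab by simp
    next
      case False then show ?thesis using inner[of l] that by simp
    qed
    ultimately show ?thesis using sK by simp
  qed
qed

end



context HLc begin

declare alg_sigma.simps(2)[simp del]

lemma part_i:
  fixes s :: "nat \<Rightarrow> real"
  assumes r: "r \<noteq> 0" and s0: "s 0 = a" and sk: "s k = b" and inc: "\<And>l. l < k \<Longrightarrow> s l < s (Suc l)"
    and le: "\<And>l. l \<in> {1..k} \<Longrightarrow> D (s (l - 1)) (s l) \<le> c / r\<^sup>2"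
  shows "K r \<le> k"
proof -
  define e where "e = c / r\<^sup>2"
  have e: "0 < e" using cpos r e_def by simp
  have k1: "1 \<le> k" using s0 sk ab by (cases k) auto
  have smono: "s i \<le> s j" if "i \<le> j" "j \<le> k" for i j
    using chain_mono[of k s i j] inc that by (simp add: less_imp_le)
  have srange: "a \<le> s l \<and> s l \<le> b" if "l \<le> k" for l
    using smono[of 0 l] smono[of l k] that s0 sk by simp
  have claim: "j < k \<longrightarrow> s j \<le> sig r j" for j
  proof (induction j)
    case 0 then show ?case using s0 by simp
  next
    case (Suc j)
    show ?case
    proof
      assume jk: "Suc j < k"
      then have IH: "s j \<le> sig r j" using Suc.IH by simp
      have sr: "a \<le> sig r j" "sig r j \<le> b" "a \<le> sig r (Suc j)" "sig r (Suc j) \<le> b"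
        using sig_range[OF r] by auto
      have sj: "a \<le> s j" "s (Suc j) \<le> b" using srange jk by auto
      show "s (Suc j) \<le> sig r (Suc j)"
      proof (cases "D (sig r j) b > e")
        case True
        note st = sig_step[OF r True[unfolded e_def]]
        show ?thesis
        proof (rule ccontr)
          assume "\<not> ?thesis"
          then have lt: "sig r (Suc j) < s (Suc j)" by simp
          have "D (sig r j) (s (Suc j)) \<le> D (s j) (s (Suc j))"
            by (rule D_mono_l) (use sj IH st lt in auto)
          moreover have "D (sig r j) (sig r (Suc j)) < D (sig r j) (s (Suc j))"
            by (rule D_strict) (use sr st lt sj e e_def in auto)
          moreover have "D (s j) (s (Suc j)) \<le> e" using le[of "Suc j"] jk e_def by simp
          ultimately show False using st(2) e_def by simp
        qed
      next
        case False
        then have "sig r (Suc j) = b" using sig_stop[OF r] e_def by simp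
        then show ?thesis using sj by simp
      qed
    qed
  qed
  have "s (k - 1) \<le> sig r (k - 1)" using claim[of "k - 1"] k1 by simp
  then have "D (sig r (k - 1)) b \<le> D (s (k - 1)) b"
    using D_mono_l[of "s (k - 1)" "sig r (k - 1)" b] srange[of "k - 1"] sig_range[OF r, of "k - 1"] by simp
  also have "\<dots> = D (s (k - 1)) (s k)" using sk by simp
  also have "\<dots> \<le> e" using le[of k] k1 e_def by simp
  finally show ?thesis using K_le[OF r k1] e_def by simp
qed

lemma part_ii:
  fixes s :: "nat \<Rightarrow> real"
  assumes r: "r \<noteq> 0" and s0: "s 0 = a" and sk: "s k = b" and inc: "\<And>l. l < k \<Longrightarrow> s l < s (Suc l)"
    and ge: "\<And>l. l \<in> {1..<k} \<Longrightarrow> D (s (l - 1)) (s l) \<ge> c / r\<^sup>2"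
  shows "k \<le> K r"
proof -
  define e where "e = c / r\<^sup>2"
  have e: "0 < e" using cpos r e_def by simp
  have smono: "s i \<le> s j" if "i \<le> j" "j \<le> k" for i j
    using chain_mono[of k s i j] inc that by (simp add: less_imp_le)
  have sstrict: "s i < s j" if "i < j" "j \<le> k" for i j
    using chain_strict[of k s i j] inc that by simp
  have srange: "a \<le> s l \<and> s l \<le> b" if "l \<le> k" for l
    using smono[of 0 l] smono[of l k] that s0 sk by simp
  have gtb: "D x b > e" if "1 \<le> j" "j < k" "a \<le> x" "x \<le> s (j - 1)" for j x
  proof -
    have j: "Suc (j - 1) = j" using that by simp
    have g: "e \<le> D (s (j - 1)) (s j)" using ge[of j] that e_def by simp
    have "s j < b" using sstrict[of j k] that sk by simp
    have "D (s (j - 1)) (s j) < D (s (j - 1)) b"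
      by (rule D_strict) (use srange[of "j - 1"] smono[of "j - 1" j] that \<open>s j < b\<close> g e in auto)
    also have "\<dots> \<le> D x b"
      by (rule D_mono_l) (use that srange[of "j - 1"] in auto)
    finally show ?thesis using g by simp
  qed
  have claim: "j < k \<longrightarrow> sig r j \<le> s j" for j
  proof (induction j)
    case 0 then show ?case using s0 by simp
  next
    case (Suc j)
    show ?case
    proof
      assume jk: "Suc j < k"
      then have IH: "sig r j \<le> s j" using Suc.IH by simp
      have sr: "a \<le> sig r j" "sig r j \<le> b" "a \<le> sig r (Suc j)" "sig r (Suc j) \<le> b"
        using sig_range[OF r] by auto
      have "D (sig r j) b > e" using gtb[of "Suc j" "sig r j"] jk IH sr by simp
      note st = sig_step[OF r this[unfolded e_def]]
      have g: "e \<le> D (s j) (s (Suc j))" using ge[of "Suc j"] jk e_def by simp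
      have sj: "s j \<le> s (Suc j)" using inc[of j] jk by simp
      show "sig r (Suc j) \<le> s (Suc j)"
      proof (rule ccontr)
        assume "\<not> ?thesis"
        then have lt: "s (Suc j) < sig r (Suc j)" by simp
        have m: "D (s j) (s (Suc j)) \<le> D (sig r j) (s (Suc j))"
          by (rule D_mono_l) (use sr IH sj srange[of "Suc j"] jk in auto)
        have "D (sig r j) (s (Suc j)) < D (sig r j) (sig r (Suc j))"
          by (rule D_strict) (use sr IH sj lt m g e in auto)
        then show False using st(2) m g e_def by simp
      qed
    qed
  qed
  show ?thesis
  proof (rule ccontr)
    assume "\<not> ?thesis"
    then have Kk: "K r < k" by simp
    have K1: "1 \<le> K r" using K_props(1)[OF r] .
    have "D (sig r (K r - 1)) b > e"
      using gtb[of "K r" "sig r (K r - 1)"] K1 Kk claim[of "K r - 1"] sig_range[OF r] by simp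
    then show False using K_props(2)[OF r] e_def by simp
  qed
qed

lemma K_mono:
  assumes r1: "0 < r1" and r12: "r1 \<le> r2"
  shows "K r1 \<le> K r2"
proof -
  have r1': "r1 \<noteq> 0" and r2: "r2 \<noteq> 0" using r1 r12 by auto
  note P = alg_part[OF r1']
  have sq: "r1\<^sup>2 \<le> r2\<^sup>2" using r1 r12 by (simp add: power_mono)
  have ee: "c / r2\<^sup>2 \<le> c / r1\<^sup>2"
    using cpos r1 r2 sq by (intro divide_left_mono) auto
  show ?thesis
  proof (rule part_ii[OF r2])
    show "sig r1 0 = a" by simp
    show "sig r1 (K r1) = b" by (rule P(1))
    show "sig r1 l < sig r1 (Suc l)" if "l < K r1" for l using P(2) that by simp
    show "c / r2\<^sup>2 \<le> D (sig r1 (l - 1)) (sig r1 l)" if "l \<in> {1..<K r1}" for l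
      using P(3)[of l] that ee by simp
  qed
qed

end



lemma div_ceil_facts:
  fixes m n :: nat
  assumes "0 < n" "1 \<le> m"
  defines "p \<equiv> (m + n - 1) div n"
  shows "1 \<le> p" "(p - 1) * n < m" "m \<le> p * n"
proof -
  define q where "q = m + n - 1"
  have qd: "q = p * n + q mod n" unfolding p_def q_def by simp
  have qm: "q mod n < n" using assms(1) by simp
  have pn: "p * n \<le> q" using qd by linarith
  have "m + n - 1 < p * n + n" using qd qm q_def by linarith
  then show "m \<le> p * n" using assms(2) by linarith
  then show "1 \<le> p" using assms(2) by (cases p) auto
  have "(p - 1) * n = p * n - n" by (simp add: diff_mult_distrib)
  then show "(p - 1) * n < m" using pn q_def assms by linarith
qed

context HLc begin

declare alg_sigma.simps(2)[simp del]

lemma K_mult: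
  fixes n :: nat
  assumes n: "0 < n" and r: "0 < r"
  shows "K (real n * r) \<le> n * K r"
proof -
  define r' where "r' = real n * r"
  have r'0: "r' \<noteq> 0" using n r r'_def by simp
  have r0: "r \<noteq> 0" using r by simp
  define m where "m = K r'"
  define \<tau> where "\<tau> = sig r'"
  define e' where "e' = c / r'\<^sup>2"
  have e'0: "0 \<le> e'" using cpos e'_def by simp
  have ee: "(real n)\<^sup>2 * e' = c / r\<^sup>2" using n r unfolding e'_def r'_def by (simp add: power_mult_distrib)
  note P = alg_part[OF r'0, folded m_def \<tau>_def e'_def]
  have m1: "1 \<le> m" using K_props(1)[OF r'0] m_def by simp
  define p where "p = (m + n - 1) div n"
  note DF = div_ceil_facts[OF n m1, folded p_def]
  have tstrict: "\<tau> i < \<tau> j" if "i < j" "j \<le> m" for i j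
    using chain_strict[of m \<tau> i j] P(2) that by simp
  have tmono: "\<tau> i \<le> \<tau> j" if "i \<le> j" "j \<le> m" for i j
    using tstrict[of i j] that by (cases "i = j") auto
  have trange: "a \<le> \<tau> i \<and> \<tau> i \<le> b" for i
    using sig_range[OF r'0] \<tau>_def by simp
  define s where "s l = (if l < p then \<tau> (l * n) else b)" for l
  have idx: "l * n < m" if "l < p" for l
  proof -
    have "l \<le> p - 1" using that by simp
    then have "l * n \<le> (p - 1) * n" by (rule mult_right_mono) simp
    then show ?thesis using DF(2) by (rule le_less_trans)
  qed
  have "p \<le> K r"
  proof (rule part_ii[OF r0])
    show "s 0 = a" using DF(1) s_def \<tau>_def by simp
    show "s p = b" using s_def by simp
    show "s l < s (Suc l)" if "l < p" for l
    proof (cases "Suc l < p")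
      case True
      then have "Suc l * n < m" using idx by blast
      moreover have "l * n < Suc l * n" using n by simp
      ultimately show ?thesis using tstrict[of "l * n" "Suc l * n"] True that s_def by simp
    next
      case False
      then have "s (Suc l) = \<tau> m" using P(1) s_def by simp
      then show ?thesis using idx[OF that] tstrict[of "l * n" m] that s_def by simp
    qed
    show "c / r\<^sup>2 \<le> D (s (l - 1)) (s l)" if "l \<in> {1..<p}" for l
    proof -
      have l: "1 \<le> l" "l < p" using that by auto
      have lm: "l * n < m" using idx l by simp
      define t where "t i = \<tau> ((l - 1) * n + i)" for i
      have tn: "(l - 1) * n + n = l * n" using l by (cases l) auto
      have "(real n)\<^sup>2 * e' \<le> D (t 0) (t n)"
      proof (rule D_super)
        show "a \<le> t 0" using trange t_def by simp
        show "t n \<le> b" using trange t_def by simp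
        show "0 \<le> e'" by (rule e'0)
        show "t i \<le> t (Suc i)" if "i < n" for i
          unfolding t_def using tmono[of "(l - 1) * n + i" "(l - 1) * n + Suc i"] that tn lm by simp
        show "e' \<le> D (t i) (t (Suc i))" if "i < n" for i
        proof -
          define j where "j = (l - 1) * n + Suc i"
          have "j \<le> l * n" using that tn j_def by simp
          then have j: "1 \<le> j" "j < m" using lm j_def by auto
          have "t i = \<tau> (j - 1)" "t (Suc i) = \<tau> j" unfolding t_def j_def by simp_all
          then show ?thesis using P(3)[OF j] by simp
        qed
      qed
      moreover have "l - 1 < p" using l by simp
      then have "t 0 = s (l - 1)" using s_def t_def by simp
      moreover have "t n = s l" using l s_def t_def tn by simp
      ultimately show ?thesis using ee by simp
    qed
  qed
  then have "p * n \<le> K r * n" by (rule mult_right_mono) simp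
  then have "m \<le> K r * n" using DF(3) by (rule order_trans[rotated])
  then show ?thesis unfolding m_def r'_def by (simp add: mult.commute)
qed

end


theorem proposition5p9:
  fixes a b c :: real and H :: "real \<Rightarrow> real^2^2"
  assumes "a < b"
    and "hamiltonian a b H"
    and "limit_circle a b H"
    and "c > 0"
  shows
    "(\<forall>r (s::nat \<Rightarrow> real) k. r > 0 \<and> s 0 = a \<and> s k = b \<and> (\<forall>l<k. s l < s (Suc l)) \<longrightarrow>
        ((\<forall>l\<in>{1..k}. det (Omega H (s (l - 1)) (s l)) \<le> c / r\<^sup>2) \<longrightarrow> kappa a b H c r \<le> k) \<and>
        ((\<forall>l\<in>{1..<k}. det (Omega H (s (l - 1)) (s l)) \<ge> c / r\<^sup>2) \<longrightarrow> kappa a b H c r \<ge> k))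
     \<and> mono_on {0<..} (kappa a b H c)
     \<and> (\<forall>(n::nat) r. n > 0 \<and> r > 0 \<longrightarrow> kappa a b H c (real n * r) \<le> n * kappa a b H c r)"
proof -
  interpret HLc a b H c using assms by unfold_locales auto
  have P1: "((\<forall>l\<in>{1..k}. det (Omega H (s (l - 1)) (s l)) \<le> c / r\<^sup>2) \<longrightarrow> kappa a b H c r \<le> k) \<and>
        ((\<forall>l\<in>{1..<k}. det (Omega H (s (l - 1)) (s l)) \<ge> c / r\<^sup>2) \<longrightarrow> kappa a b H c r \<ge> k)"
    if h: "r > 0" "s 0 = a" "s k = b" "\<forall>l<k. s l < s (Suc l)" for r s k
  proof -
    have r0: "r \<noteq> 0" using h by simp
    have inc: "\<And>l. l < k \<Longrightarrow> s l < s (Suc l)" using h by simp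
    have smono: "s i \<le> s j" if "i \<le> j" "j \<le> k" for i j
      using chain_mono[of k s i j] inc that by (simp add: less_imp_le)
    have eqD: "det (Omega H (s (l - 1)) (s l)) = D (s (l - 1)) (s l)" if "l \<le> k" for l
    proof -
      have "a \<le> s (l - 1)" using smono[of 0 "l - 1"] that h by simp
      moreover have "s l \<le> b" using smono[of l k] that h by simp
      ultimately show ?thesis using Omega_O D_def by simp
    qed
    show ?thesis
    proof (intro conjI impI)
      assume le: "\<forall>l\<in>{1..k}. det (Omega H (s (l - 1)) (s l)) \<le> c / r\<^sup>2"
      show "kappa a b H c r \<le> k"
        by (rule part_i[OF r0 h(2) h(3) inc]) (use le eqD in auto)
    next
      assume ge: "\<forall>l\<in>{1..<k}. det (Omega H (s (l - 1)) (s l)) \<ge> c / r\<^sup>2"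
      show "kappa a b H c r \<ge> k"
        by (rule part_ii[OF r0 h(2) h(3) inc]) (use ge eqD in auto)
    qed
  qed
  have P2: "mono_on {0<..} (kappa a b H c)"
    by (rule mono_onI) (use K_mono in auto)
  have P3: "kappa a b H c (real n * r) \<le> n * kappa a b H c r" if "n > 0" "r > 0" for n :: nat and r :: real
    using K_mult that by simp
  show ?thesis using P1 P2 P3 by blast
qed

end
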